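(* For every integer $b\geq 1$, $$\sum_{n\geq 1}\frac{H_n}{(2n+1)^{4b+1}}=-2\lambda(4b+1)\ln 2+\Big(2b+\frac12\Big)\lambda(4b+2)-\lambda(2b+1)^2-2\sum_{q=1}^{b-1}\lambda(2q+1)\lambda(4b-2q+1),$$ where an empty sum equals $0$.
   Context: $H_n=1+\frac12+\cdots+\frac1n$ is the $n$-th harmonic number. For real $s>1$, $\lambda(s)=\sum_{n\geq 1}\frac{1}{(2n-1)^s}=(1-2^{-s})\zeta(s)$. *)

theory Defs
  imports "HOL-Analysis.Analysis"
begin

text \<open>Dirichlet lambda function lambda(s) = sum over n >= 1 of 1/(2n-1)^s, for real s > 1
  (here only needed at integer arguments). Index shifted: k = n - 1 >= 0.\<close>
definition dlambda :: "real \<Rightarrow> real" where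
  "dlambda s = (\<Sum>k. 1 / (2 * real k + 1) powr s)"

end

theory Submission
  imports Defs
begin

definition od :: "nat \<Rightarrow> real" where "od a = 2 * real a + 1"
definition L :: "nat \<Rightarrow> real" where "L s = (\<Sum>a. 1 / od a ^ s)"

lemma od_pos [simp]: "od a > 0" and od_ge1: "od a \<ge> 1" by (auto simp: od_def)

lemma dlambda_nat: "dlambda (real s) = L s"
  unfolding dlambda_def L_def od_def
  by (intro suminf_cong) (simp add: powr_realpow)

lemma summable_L: assumes "s \<ge> 2" shows "summable (\<lambda>a. 1 / od a ^ s)"
proof (rule summable_comparison_test[OF _ inverse_power_summable[OF \<open>s\<ge>2\<close>]])
  show "\<exists>N. \<forall>n\<ge>N. norm (1 / od n ^ s) \<le> inverse (real n ^ s)"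
  proof (intro exI allI impI)
    fix n :: nat assume "n \<ge> 1"
    have "real n ^ s \<le> od n ^ s" by (intro power_mono) (auto simp: od_def)
    then show "norm (1 / od n ^ s) \<le> inverse (real n ^ s)"
      using \<open>n\<ge>1\<close> by (simp add: inverse_eq_divide frac_le)
  qed
qed

lemma sums_L: "s \<ge> 2 \<Longrightarrow> (\<lambda>a. 1 / od a ^ s) sums L s"
  unfolding L_def using summable_L by (simp add: summable_sums)

lemma telesc:
  fixes f :: "nat \<Rightarrow> real"
  assumes "f \<longlonglongrightarrow> 0"
  shows "(\<lambda>k. f k - f (k + m)) sums (\<Sum>i<m. f i)"
proof (induction m)
  case 0 then show ?case by simp
next
  case (Suc m)
  have "(\<lambda>k. f (k + m) - f (Suc (k + m))) sums (f (0 + m) - 0)"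
    using telescope_sums'[of "\<lambda>k. f (k + m)" 0] assms LIMSEQ_ignore_initial_segment by force
  from sums_add[OF Suc this] show ?case by (simp add: algebra_simps)
qed

lemma harm_sums: "(\<lambda>k. 1 / real (k+1) - 1 / real (k + 1 + n)) sums harm n"
proof -
  have "(\<lambda>k. 1 / real (k+1)) \<longlonglongrightarrow> 0"
    using LIMSEQ_inverse_real_of_nat by (simp add: inverse_eq_divide)
  from telesc[OF this, of n] show ?thesis
    by (simp add: harm_altdef inverse_eq_divide add.commute add.left_commute)
qed

lemma odd_ln_sums: "(\<lambda>n. 1 / od n - 1 / (od n + od k)) sums (harm k / 2 + ln 2)"
proof -
  have a: "(\<lambda>n. 1 / real (2*n+1) - 1 / real (2*n+2)) sums ln 2"
    using alternating_harmonic_series_sums' by (simp add: inverse_eq_divide)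
  have b: "(\<lambda>n. (1/2) * (1 / real (n+1) - 1 / real (n + 1 + k))) sums ((1/2) * harm k)"
    by (intro sums_mult harm_sums)
  have "(\<lambda>n. 1 / real (2*n+1) - 1 / real (2*n+2) + (1/2) * (1 / real (n+1) - 1 / real (n + 1 + k)))
        = (\<lambda>n. 1 / od n - 1 / (od n + od k))"
  proof (rule ext)
    fix n
    have h: "\<And>u w::real. u \<ge> 0 \<Longrightarrow> w \<ge> 0 \<Longrightarrow>
      1 / (2*u+1) - 1 / (2*u+2) + (1/2) * (1 / (u+1) - 1 / (u+1+w)) = 1/(2*u+1) - 1/(2*u+1+(2*w+1))"
    proof -
      fix u w :: real assume "u \<ge> 0" "w \<ge> 0"
      then have nz: "2*u+1 \<noteq> 0" "2*u+2 \<noteq> 0" "u+1 \<noteq> 0" "u+1+w \<noteq> 0" "2*u+2*w+2 \<noteq> 0" by auto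
      have "1 / (2*u+2) = (1/2) * (1/(u+1))" using nz by (simp add: field_simps)
      moreover have "1 / (2*u+2*w+2) = (1/2) * (1/(u+1+w))" using nz by (simp add: field_simps)
      ultimately show "1 / (2*u+1) - 1 / (2*u+2) + (1/2) * (1 / (u+1) - 1 / (u+1+w)) = 1/(2*u+1) - 1/(2*u+1+(2*w+1))"
        by (simp add: algebra_simps)
    qed
    show "1 / real (2*n+1) - 1 / real (2*n+2) + (1/2) * (1 / real (n+1) - 1 / real (n + 1 + k))
        = 1 / od n - 1 / (od n + od k)"
    proof -
      have e: "real (2*n+1) = 2*real n+1" "real (2*n+2) = 2*real n+2" "real(n+1) = real n+1"
        "real(n+1+k) = real n+1+real k"
        by (auto simp: od_def)
      show ?thesis unfolding e od_def by (rule h) auto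
    qed
  qed
  with sums_add[OF a b] show ?thesis by (simp add: algebra_simps)
qed

lemma pf:
  fixes x y :: real assumes "x > 0" "y > 0"
  shows "1 / ((x+y) * x^p) = (\<Sum>i<p. (-1)^i / (y^(i+1) * x^(p-i))) + (-1)^p / (y^p * (x+y))"
proof (induction p)
  case 0 then show ?case by simp
next
  case (Suc p)
  have e: "1 / ((x+y) * x^Suc p) = (1 / ((x+y) * x^p)) / x" by simp
  have "(\<Sum>i<p. (-1)^i / (y^(i+1) * x^(p-i))) / x = (\<Sum>i<p. (-1)^i / (y^(i+1) * x^(Suc p-i)))"
    unfolding sum_divide_distrib
    by (intro sum.cong refl) (simp add: Suc_diff_le less_imp_le)
  moreover have "(-1)^p / (y^p * (x+y)) / x = (-1)^p / (y^(p+1) * x^(Suc p - p)) + (-1)^Suc p / (y^Suc p * (x+y))"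
  proof -
    have xy: "x + y \<noteq> 0" "x \<noteq> 0" "y \<noteq> 0" using assms by auto
    have h: "1/(x*(x+y)) = 1/(y*x) - 1/(y*(x+y))" using xy by (simp add: divide_simps)
    have "(-1)^p / (y^p * (x+y)) / x = (-1)^p / y^p * (1/(x*(x+y)))" by simp
    also have "\<dots> = (-1)^p / (y^(p+1) * x^(Suc p - p)) + (-1)^Suc p / (y^Suc p * (x+y))"
    proof -
      have a: "(-1::real)^p / y^p * (1/(y*x)) = (-1)^p / (y^(p+1) * x^(Suc p - p))" by simp
      have b: "(-1::real)^p / y^p * (1/(y*(x+y))) = - ((-1)^Suc p / (y^Suc p * (x+y)))" by simp
      show ?thesis unfolding h right_diff_distrib a b by simp
    qed
    finally show ?thesis .
  qed
  ultimately show ?case unfolding e Suc by (simp add: add_divide_distrib)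
qed

lemma neg_div_aux: "1 / (p - q) = - (1 / (q - (p::real)))"
  by (metis minus_diff_eq minus_divide_right)

lemma harm_add: "harm (a + m) = (harm a :: real) + (\<Sum>c<m. 1 / real (a + c + 1))"
  by (induction m) (simp_all add: harm_Suc inverse_eq_divide)

lemma od_sq_diff: "od c ^ 2 - od a ^ 2 = 4 * (real c - real a) * (real c + real a + 1)"
  by (simp add: od_def power2_eq_square algebra_simps)

lemma K_term:
  assumes "c \<noteq> a"
  shows "1 / (od c ^ 2 - od a ^ 2) = (1 / (4 * od a)) * (1 / (real c - real a) - 1 / (real c + real a + 1))"
proof -
  define u where "u = real c - real a"
  define w where "w = real c + real a + 1"
  have u: "u \<noteq> 0" using assms by (simp add: u_def)
  have w: "w \<noteq> 0" unfolding w_def by linarith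
  have o: "od a = w - u" by (simp add: od_def u_def w_def)
  have oz: "w - u \<noteq> 0" using od_pos[of a] o by linarith
  have "1/u - 1/w = (w - u)/(u*w)" using u w by (simp add: field_simps)
  moreover have "od c ^ 2 - od a ^ 2 = 4 * u * w" unfolding od_sq_diff u_def w_def by simp
  ultimately show ?thesis unfolding o u_def[symmetric] w_def[symmetric] using oz u w by (simp add: field_simps)
qed

lemma K: "(\<lambda>c. if c = a then 0 else 1 / (od c ^ 2 - od a ^ 2)) sums (1 / (4 * od a ^ 2))"
proof -
  define f where "f c = (if c = a then 0 else 1 / (od c ^ 2 - od a ^ 2))" for c
  define k where "k = 1 / (4 * od a)"
  have sh: "(\<lambda>d. f (d + Suc a)) sums (k * harm (2*a+1))"
  proof -
    have "(\<lambda>d. k * (1 / real (d+1) - 1 / real (d + 1 + (2*a+1)))) sums (k * harm (2*a+1))"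
      by (intro sums_mult harm_sums)
    moreover have "f (d + Suc a) = k * (1 / real (d+1) - 1 / real (d + 1 + (2*a+1)))" for d
    proof -
      have "f (d + Suc a) = k * (1 / (real (d + Suc a) - real a) - 1 / (real (d + Suc a) + real a + 1))"
        unfolding f_def k_def using K_term[of "d + Suc a" a] by simp
      also have "real (d + Suc a) - real a = real (d+1)" by simp
      also have "real (d + Suc a) + real a + 1 = real (d + 1 + (2*a+1))" by simp
      finally show ?thesis .
    qed
    ultimately show ?thesis by simp
  qed
  have fin: "(\<Sum>c<Suc a. f c) = k * (- harm (2*a))"
  proof -
    have "(\<Sum>c<Suc a. f c) = (\<Sum>c<a. f c)" by (simp add: f_def)
    also have "\<dots> = (\<Sum>c<a. k * (1 / (real c - real a) - 1 / (real c + real a + 1)))"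
      by (intro sum.cong refl) (auto simp: f_def k_def K_term)
    also have "\<dots> = k * ((\<Sum>c<a. 1 / (real c - real a)) - (\<Sum>c<a. 1 / (real c + real a + 1)))"
      by (simp add: sum_distrib_left sum_subtractf right_diff_distrib)
    also have "(\<Sum>c<a. 1 / (real c + real a + 1)) = (\<Sum>c<a. 1 / real (a + c + 1))"
      by (intro sum.cong refl) (simp add: add.commute)
    also have "(\<Sum>c<a. 1 / (real c - real a)) = - harm a"
    proof -
      have "(\<Sum>c<a. 1 / (real c - real a)) = (\<Sum>c<a. - (1 / real (Suc (a - Suc c))))"
        by (intro sum.cong refl) (auto simp: of_nat_diff intro: neg_div_aux)
      also have "\<dots> = (\<Sum>c<a. - (1 / real (Suc c)))"
        by (rule sum.nat_diff_reindex)
      also have "\<dots> = - harm a" by (simp add: harm_altdef sum_negf inverse_eq_divide)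
      finally show ?thesis .
    qed
    also have "(\<Sum>c<a. 1 / real (a + c + 1)) = harm (2*a) - harm a"
      using harm_add[of a a] by (simp add: mult_2)
    finally show ?thesis by simp
  qed
  have "f sums (k * harm (2*a+1) + k * (- harm (2*a)))"
    using sh fin sums_iff_shift[of f "Suc a"] by simp
  also have "k * harm (2*a+1) + k * (- harm (2*a)) = 1 / (4 * od a ^ 2)"
    by (simp add: harm_Suc k_def od_def power2_eq_square algebra_simps inverse_eq_divide)
  finally show ?thesis unfolding f_def .
qed

lemma sq_diff_ge:
  assumes "y < x" shows "od x ^ 2 - od y ^ 2 \<ge> 4 * (real x + 1)"
proof -
  have "real x - real y \<ge> 1" using assms by (simp add: nat_less_real_le)
  moreover have "real x + real y + 1 \<ge> real x + 1" by simp
  ultimately have "(real x - real y) * (real x + real y + 1) \<ge> 1 * (real x + 1)"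
    by (intro mult_mono) auto
  then show ?thesis unfolding od_sq_diff mult.assoc by linarith
qed

lemma abs_sq_diff_ge:
  assumes "y \<noteq> x" shows "\<bar>od y ^ 2 - od x ^ 2\<bar> \<ge> 1"
proof (cases "y < x")
  case True
  then show ?thesis using sq_diff_ge[OF True] by simp
next
  case False
  then have "x < y" using assms by simp
  then show ?thesis using sq_diff_ge[of x y] by simp
qed

definition Cs :: "nat \<Rightarrow> real" where "Cs x = (\<Sum>y<x. 1 / (od x ^ 2 - od y ^ 2))"

lemma Cs_bounds: "0 \<le> Cs x" "Cs x \<le> 1"
proof -
  have t: "0 \<le> 1 / (od x ^ 2 - od y ^ 2)" "1 / (od x ^ 2 - od y ^ 2) \<le> 1 / (real x + 1)" if "y < x" for y
  proof -
    have h: "od x ^ 2 - od y ^ 2 \<ge> 4 * (real x + 1)" by (rule sq_diff_ge[OF that])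
    then show "0 \<le> 1 / (od x ^ 2 - od y ^ 2)" by simp
    show "1 / (od x ^ 2 - od y ^ 2) \<le> 1 / (real x + 1)"
      using h by (intro divide_left_mono) auto
  qed
  show "0 \<le> Cs x" unfolding Cs_def by (intro sum_nonneg) (use t in auto)
  have "Cs x \<le> (\<Sum>y<x. 1 / (real x + 1))" unfolding Cs_def by (intro sum_mono) (use t in auto)
  also have "\<dots> = real x / (real x + 1)" by simp
  also have "\<dots> \<le> 1" by simp
  finally show "Cs x \<le> 1" .
qed

lemma abs_sums: "(\<lambda>y. if y = x then 0 else 1 / \<bar>od y ^ 2 - od x ^ 2\<bar>) sums (1 / (4 * od x ^ 2) + 2 * Cs x)"
proof -
  have s2: "(\<lambda>y. if y \<in> {..<x} then 2 / (od x ^ 2 - od y ^ 2) else 0) sums (\<Sum>y\<in>{..<x}. 2 / (od x ^ 2 - od y ^ 2))"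
    by (rule sums_If_finite_set) simp
  have "(\<Sum>y\<in>{..<x}. 2 / (od x ^ 2 - od y ^ 2)) = 2 * Cs x"
    unfolding Cs_def sum_distrib_left by simp
  moreover have "(if y = x then 0 else 1 / (od y ^ 2 - od x ^ 2)) + (if y \<in> {..<x} then 2 / (od x ^ 2 - od y ^ 2) else 0)
      = (if y = x then 0 else 1 / \<bar>od y ^ 2 - od x ^ 2\<bar>)" for y
  proof (cases "y < x")
    case True
    then have "od y ^ 2 - od x ^ 2 < 0" using sq_diff_ge[OF True] by simp
    then have "\<bar>od y ^ 2 - od x ^ 2\<bar> = od x ^ 2 - od y ^ 2" by simp
    moreover have "1 / (od y ^ 2 - od x ^ 2) = - (1 / (od x ^ 2 - od y ^ 2))" by (rule neg_div_aux)
    ultimately show ?thesis using True by simp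
  next
    case False
    show ?thesis
    proof (cases "y = x")
      case True then show ?thesis by simp
    next
      case ne: False
      with False have "x < y" by simp
      then have "od y ^ 2 - od x ^ 2 > 0" using sq_diff_ge[of x y] by simp
      then show ?thesis using False ne by simp
    qed
  qed
  ultimately show ?thesis using sums_add[OF K[of x] s2] by simp
qed

lemma swapG:
  assumes M: "M \<ge> 1"
  defines "\<phi> \<equiv> (\<lambda>y x. if x = y then 0 else 1 / ((od y ^ 2 - od x ^ 2) * od x ^ (2*M)))"
  shows "(\<lambda>y. \<Sum>x. \<phi> y x) sums (L (2*M+2) / 4)"
proof -
  have M2: "2*M \<ge> 2" using M by simp
  define D where "D x = 1 / (4 * od x ^ 2) + 2 * Cs x" for x
  define \<rho> where "\<rho> = (\<lambda>(x,y). \<bar>\<phi> y x\<bar>)"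
  have \<rho>eq: "\<rho> (x,y) = (if y = x then 0 else 1 / \<bar>od y ^ 2 - od x ^ 2\<bar>) * (1 / od x ^ (2*M))" for x y
    by (simp add: \<rho>_def \<phi>_def abs_mult)
  have inner_abs: "(\<lambda>y. \<rho> (x,y)) sums (D x * (1 / od x ^ (2*M)))" for x
    unfolding \<rho>eq D_def by (intro sums_mult2 abs_sums)
  have D_le: "D x \<le> 3" "D x \<ge> 0" for x
  proof -
    have "1 \<le> od x ^ 2" using od_ge1[of x] by (rule one_le_power)
    then have "1 / (4 * od x ^ 2) \<le> 1" by (simp add: divide_le_eq)
    then show "D x \<le> 3" using Cs_bounds[of x] by (simp add: D_def)
    show "D x \<ge> 0" using Cs_bounds[of x] by (simp add: D_def)
  qed
  have \<rho>_summ: "\<rho> summable_on Sigma UNIV (\<lambda>_. UNIV)"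
  proof (rule summable_on_SigmaI)
    show "((\<lambda>y. \<rho> (x, y)) has_sum (D x * (1 / od x ^ (2*M)))) UNIV" for x
      by (rule sums_nonneg_imp_has_sum[OF inner_abs]) (simp add: \<rho>_def)
    show "(\<lambda>x. D x * (1 / od x ^ (2*M))) summable_on UNIV"
    proof (rule summable_nonneg_imp_summable_on)
      show "summable (\<lambda>x. D x * (1 / od x ^ (2*M)))"
      proof (rule summable_comparison_test[OF _ summable_mult[OF summable_L[OF M2], of 3]])
        show "\<exists>N. \<forall>n\<ge>N. norm (D n * (1 / od n ^ (2*M))) \<le> 3 * (1 / od n ^ (2*M))"
          using D_le by (intro exI[of _ 0] allI impI) (simp add: abs_mult divide_right_mono)
      qed
      show "0 \<le> D x * (1 / od x ^ (2*M))" for x using D_le[of x] by simp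
    qed
    show "\<rho> (x,y) \<ge> 0" for x y by (simp add: \<rho>_def)
  qed
  define f where "f = (\<lambda>(x,y). \<phi> y x)"
  have f_summ: "f summable_on UNIV \<times> UNIV"
  proof -
    have "(\<lambda>z. norm (f z)) summable_on UNIV \<times> UNIV"
      using \<rho>_summ by (rule summable_on_cong[THEN iffD1, rotated]) (auto simp: \<rho>_def f_def)
    then show ?thesis using summable_on_iff_abs_summable_on_real by blast
  qed
  have inner_x: "(\<lambda>y. \<phi> y x) sums (1 / (4 * od x ^ (2*M+2)))" for x
  proof -
    have e1: "(\<lambda>y. \<phi> y x) = (\<lambda>y. (if y = x then 0 else 1 / (od y ^ 2 - od x ^ 2)) * (1 / od x ^ (2*M)))"
      by (auto simp: \<phi>_def)
    have e2: "1 / (4 * od x ^ (2*M+2)) = 1 / (4 * od x ^ 2) * (1 / od x ^ (2*M))"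
      by (simp add: power_add field_simps power2_eq_square)
    show ?thesis unfolding e1 e2 by (intro sums_mult2 K)
  qed
  have f_has: "(f has_sum (L (2*M+2) / 4)) (Sigma UNIV (\<lambda>_. UNIV))"
  proof (rule has_sum_SigmaI)
    show "((\<lambda>y. f (x, y)) has_sum (1 / (4 * od x ^ (2*M+2)))) UNIV" for x
    proof (rule norm_summable_imp_has_sum)
      show "summable (\<lambda>y. norm (f (x, y)))"
        using inner_abs[of x] by (simp add: sums_iff \<rho>_def f_def)
      show "(\<lambda>y. f (x, y)) sums (1 / (4 * od x ^ (2*M+2)))"
        using inner_x[of x] by (simp add: f_def)
    qed
    have "(\<lambda>x. (1/4) * (1 / od x ^ (2*M+2))) sums ((1/4) * L (2*M+2))"
      by (intro sums_mult sums_L) simp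
    then show "((\<lambda>x. 1 / (4 * od x ^ (2*M+2))) has_sum (L (2*M+2) / 4)) UNIV"
      by (intro sums_nonneg_imp_has_sum) (auto simp: mult.commute less_imp_le)
    show "f summable_on Sigma UNIV (\<lambda>_. UNIV)" using f_summ by simp
  qed
  then have g_has: "((\<lambda>(y,x). \<phi> y x) has_sum (L (2*M+2) / 4)) (UNIV \<times> UNIV)"
    using has_sum_swap[where f=f and A=UNIV and B=UNIV] by (simp add: f_def)
  have inner_y: "((\<lambda>x. \<phi> y x) has_sum (\<Sum>x. \<phi> y x)) UNIV" for y
  proof -
    have b: "norm (\<phi> y x) \<le> 1 / od x ^ (2*M)" for x
    proof (cases "x = y")
      case False
      then have "\<bar>od y ^ 2 - od x ^ 2\<bar> \<ge> 1" using abs_sq_diff_ge by auto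
      then have "1 / \<bar>od y ^ 2 - od x ^ 2\<bar> \<le> 1" by simp
      then have "1 / \<bar>od y ^ 2 - od x ^ 2\<bar> * (1 / od x ^ (2*M)) \<le> 1 * (1 / od x ^ (2*M))"
        by (intro mult_right_mono) auto
      then show ?thesis using False by (simp add: \<phi>_def abs_mult)
    qed (simp add: \<phi>_def)
    have sn: "summable (\<lambda>x. norm (\<phi> y x))"
      by (rule summable_comparison_test[OF _ summable_L[OF M2]]) (use b in auto)
    then have "summable (\<lambda>x. \<phi> y x)" by (rule summable_norm_cancel)
    then show ?thesis by (intro norm_summable_imp_has_sum sn summable_sums)
  qed
  have "((\<lambda>y. \<Sum>x. \<phi> y x) has_sum (L (2*M+2) / 4)) UNIV"
    using has_sum_Sigma'[where f="\<lambda>(y,x). \<phi> y x" and A=UNIV and B="\<lambda>_. UNIV"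
        and b="\<lambda>y. \<Sum>x. \<phi> y x" and a="L (2*M+2) / 4"] g_has inner_y by simp
  then show ?thesis by (rule has_sum_imp_sums)
qed

lemma geom:
  fixes A B :: real
  assumes "A \<noteq> 0" "B \<noteq> 0" "A \<noteq> B"
  shows "(\<Sum>j<M. 1 / (A^(j+1) * B^(M-j))) = 1 / ((A-B) * B^M) + 1 / ((B-A) * A^M)"
proof (induction M)
  case 0
  show ?case using neg_div_aux[of B A] by simp
next
  case (Suc M)
  have ab: "A - B \<noteq> 0" "B - A \<noteq> 0" using assms by auto
  have "(\<Sum>j<Suc M. 1 / (A^(j+1) * B^(Suc M-j))) = (\<Sum>j<M. 1 / (A^(j+1) * B^(M-j))) / B + 1 / (A^(M+1) * B)"
    unfolding sum_divide_distrib
    by (simp add: Suc_diff_le less_imp_le mult_ac)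
  also have "\<dots> = (1 / ((A-B) * B^M) + 1 / ((B-A) * A^M)) / B + 1 / (A^(M+1) * B)"
    unfolding Suc ..
  also have "\<dots> = 1 / ((A-B) * B^Suc M) + 1 / ((B-A) * A^Suc M)"
  proof -
    have z: "A^M \<noteq> 0" using assms by simp
    have h: "\<And>Z. Z \<noteq> 0 \<Longrightarrow> 1/((B-A)*Z)/B + 1/(A*Z*B) = 1/((B-A)*(A*Z))"
      using assms ab by (simp add: field_simps)
    have "(1 / ((A-B) * B^M) + 1 / ((B-A) * A^M)) / B + 1 / (A^(M+1) * B)
        = 1 / ((A-B) * B^M) / B + (1/((B-A)*A^M)/B + 1/(A*A^M*B))"
      by (simp add: add_divide_distrib mult_ac)
    also have "\<dots> = 1 / ((A-B) * B^Suc M) + 1 / ((B-A) * A^Suc M)"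
      using h[OF z] by (simp add: mult_ac)
    finally show ?thesis .
  qed
  finally show ?case .
qed

lemma pw: "((a::real)^2)^k = a^(2*k)" by (simp add: power_mult)

lemma od_inj: "od x ^ 2 = od y ^ 2 \<Longrightarrow> x = y"
proof -
  assume "od x ^ 2 = od y ^ 2"
  then have "od x = od y" using od_pos[of x] od_pos[of y] by (simp add: power2_eq_iff)
  then show "x = y" by (simp add: od_def)
qed

lemma even_conv:
  assumes M: "M \<ge> 1"
  shows "(\<Sum>j<M. L (2*j+2) * L (2*(M-j))) = (real M + 1/2) * L (2*M+2)"
proof -
  define \<phi> where "\<phi> = (\<lambda>y x. if x = y then 0 else 1 / ((od y ^ 2 - od x ^ 2) * od x ^ (2*M)))"
  define g where "g = (\<lambda>x y. if x = y then 0 else 1 / ((od x ^ 2 - od y ^ 2) * od y ^ (2*M)))"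
  define F where "F = (\<lambda>x y. \<Sum>j<M. 1 / (od x ^ (2*j+2) * od y ^ (2*(M-j))))"
  define S1 where "S1 = (\<lambda>y. \<Sum>j<M. L (2*j+2) * (1 / od y ^ (2*(M-j))))"
  have dec: "F x y = g x y + \<phi> y x + (if x = y then real M / od y ^ (2*M+2) else 0)" for x y
  proof (cases "x = y")
    case True
    have "F x y = (\<Sum>j<M. 1 / od y ^ (2*M+2))"
      unfolding F_def True
    proof (intro sum.cong refl)
      fix j assume "j \<in> {..<M}"
      then have "2*j+2 + 2*(M-j) = 2*M+2" by simp
      then show "1 / (od y ^ (2*j+2) * od y ^ (2*(M-j))) = 1 / od y ^ (2*M+2)"
        by (metis power_add)
    qed
    then show ?thesis using True by (simp add: g_def \<phi>_def)
  next
    case False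
    have ne: "od x ^ 2 \<noteq> od y ^ 2" using od_inj False by blast
    have nx: "od x ^ 2 \<noteq> 0" using od_pos[of x] by (metis power_not_zero less_irrefl)
    have ny: "od y ^ 2 \<noteq> 0" using od_pos[of y] by (metis power_not_zero less_irrefl)
    have "F x y = (\<Sum>j<M. 1 / ((od x ^ 2)^(j+1) * (od y ^ 2)^(M-j)))"
      unfolding F_def pw by (intro sum.cong refl) (simp add: algebra_simps)
    also have "\<dots> = 1 / ((od x ^ 2 - od y ^ 2) * (od y ^ 2)^M) + 1 / ((od y ^ 2 - od x ^ 2) * (od x ^ 2)^M)"
      by (rule geom[OF nx ny ne])
    finally show ?thesis using False by (simp add: g_def \<phi>_def power_mult[symmetric])
  qed
  have sF: "(\<lambda>x. F x y) sums S1 y" for y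
    unfolding F_def S1_def
  proof (intro sums_sum)
    fix j assume "j \<in> {..<M}"
    have "(\<lambda>x. (1 / od x ^ (2*j+2)) * (1 / od y ^ (2*(M-j)))) sums (L (2*j+2) * (1 / od y ^ (2*(M-j))))"
      by (intro sums_mult2 sums_L) simp
    then show "(\<lambda>x. 1 / (od x ^ (2*j+2) * od y ^ (2*(M-j)))) sums (L (2*j+2) * (1 / od y ^ (2*(M-j))))"
      by simp
  qed
  have sg: "(\<lambda>x. g x y) sums (1 / (4 * od y ^ (2*M+2)))" for y
  proof -
    have e1: "(\<lambda>x. g x y) = (\<lambda>x. (if x = y then 0 else 1 / (od x ^ 2 - od y ^ 2)) * (1 / od y ^ (2*M)))"
      by (auto simp: g_def)
    have e2: "1 / (4 * od y ^ (2*M+2)) = 1 / (4 * od y ^ 2) * (1 / od y ^ (2*M))"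
      by (simp add: power_add field_simps power2_eq_square)
    show ?thesis unfolding e1 e2 by (intro sums_mult2 K)
  qed
  have si: "(\<lambda>x. if x = y then real M / od y ^ (2*M+2) else 0) sums (real M / od y ^ (2*M+2))" for y
    using sums_single[of y "\<lambda>x. real M / od x ^ (2*M+2)"] by (simp cong: if_cong)
  have G: "(\<Sum>x. \<phi> y x) = S1 y - (real M + 1/4) * (1 / od y ^ (2*M+2))" for y
  proof -
    have "(\<lambda>x. F x y - g x y - (if x = y then real M / od y ^ (2*M+2) else 0)) sums
          (S1 y - 1 / (4 * od y ^ (2*M+2)) - real M / od y ^ (2*M+2))"
      by (intro sums_diff sF sg si)
    moreover have "(\<lambda>x. F x y - g x y - (if x = y then real M / od y ^ (2*M+2) else 0)) = \<phi> y"
      by (rule ext) (simp add: dec)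
    ultimately have "\<phi> y sums (S1 y - 1 / (4 * od y ^ (2*M+2)) - real M / od y ^ (2*M+2))" by simp
    then have "(\<Sum>x. \<phi> y x) = S1 y - 1 / (4 * od y ^ (2*M+2)) - real M / od y ^ (2*M+2)"
      by (simp add: sums_iff)
    moreover have "(real M + 1/4) * (1 / P) = real M / P + 1 / (4 * P)" for P :: real
      by (cases "P = 0") (simp_all add: field_simps)
    ultimately show ?thesis by simp
  qed
  have sw: "(\<lambda>y. S1 y - (real M + 1/4) * (1 / od y ^ (2*M+2))) sums (L (2*M+2) / 4)"
  proof -
    have "(\<lambda>y. \<Sum>x. \<phi> y x) sums (L (2*M+2) / 4)" using swapG[OF M] by (simp add: \<phi>_def)
    then show ?thesis by (simp add: G)
  qed
  have s1: "S1 sums (\<Sum>j<M. L (2*j+2) * L (2*(M-j)))"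
    unfolding S1_def
  proof (intro sums_sum sums_mult sums_L)
    fix j assume "j \<in> {..<M}" then show "2 \<le> 2*(M-j)" by simp
  qed
  have s2: "(\<lambda>y. (real M + 1/4) * (1 / od y ^ (2*M+2))) sums ((real M + 1/4) * L (2*M+2))"
    by (intro sums_mult sums_L) simp
  have "(\<lambda>y. S1 y - (real M + 1/4) * (1 / od y ^ (2*M+2))) sums
        ((\<Sum>j<M. L (2*j+2) * L (2*(M-j))) - (real M + 1/4) * L (2*M+2))"
    by (intro sums_diff s1 s2)
  from sums_unique2[OF this sw] show ?thesis by (simp add: field_simps)
qed

lemma pf_odd:
  fixes x y :: real assumes "x > 0" "y > 0" "odd p" "p \<ge> 3"
  shows "1 / ((x+y) * x^p) = 1 / (y * x^p) + (\<Sum>i\<in>{1..<p-1}. (-1)^i / (y^(i+1) * x^(p-i)))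
           + (1 / y^p) * (1/x - 1/(x+y))"
proof -
  have pe: "p = Suc (p-1)" using assms by simp
  have "(\<Sum>i<p. (-1)^i / (y^(i+1) * x^(p-i))) = (\<Sum>i<p-1. (-1)^i / (y^(i+1) * x^(p-i))) + (-1)^(p-1) / (y^p * x)"
    by (subst pe, subst sum.lessThan_Suc) (use assms in \<open>simp add: Suc_diff_le\<close>)
  also have "(\<Sum>i<p-1. (-1)^i / (y^(i+1) * x^(p-i))) = 1 / (y * x^p) + (\<Sum>i\<in>{1..<p-1}. (-1)^i / (y^(i+1) * x^(p-i)))"
    using assms by (simp add: lessThan_atLeast0 sum.atLeast_Suc_lessThan)
  also have "(-1::real)^(p-1) = 1" using assms by (simp add: neg_one_even_power)
  finally have e: "(\<Sum>i<p. (-1)^i / (y^(i+1) * x^(p-i))) = 1 / (y * x^p) + (\<Sum>i\<in>{1..<p-1}. (-1)^i / (y^(i+1) * x^(p-i))) + 1 / (y^p * x)" .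
  have "(-1::real)^p = -1" using assms by (simp add: neg_one_odd_power)
  then show ?thesis using pf[OF assms(1,2), of p] e by (simp add: right_diff_distrib)
qed

lemma harm_le: "harm n \<le> (real n :: real)"
proof (induction n)
  case (Suc n)
  have "inverse (real (Suc n)) \<le> 1" by (simp add: inverse_le_1_iff)
  then show ?case using Suc by (simp add: harm_Suc)
qed (simp add: harm_altdef)

lemma T_summable: assumes "p \<ge> 3" shows "summable (\<lambda>n. harm n / od n ^ p)"
proof (rule summable_comparison_test[OF _ summable_L[of "p-1"]])
  show "\<exists>N. \<forall>n\<ge>N. norm (harm n / od n ^ p) \<le> 1 / od n ^ (p-1)"
  proof (intro exI allI impI)
    fix n :: nat
    have p: "p = Suc (p-1)" using assms by simp
    have "harm n \<le> od n" using harm_le[of n] by (simp add: od_def)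
    then have "harm n / od n ^ p \<le> od n / od n ^ p" by (intro divide_right_mono) (auto simp: less_imp_le)
    also have "\<dots> = 1 / od n ^ (p-1)" using od_pos[of n] by (subst p) (simp del: od_pos)
    finally show "norm (harm n / od n ^ p) \<le> 1 / od n ^ (p-1)" using harm_nonneg[of n] od_pos[of n] by (simp del: od_pos)
  qed
qed (use assms in simp)

lemma main_T:
  assumes p: "odd p" "p \<ge> 3"
  shows "(\<lambda>n. harm n / od n ^ p) sums (- 2 * ln 2 * L p - (\<Sum>i\<in>{1..<p-1}. (-1)^i * L (i+1) * L (p-i)))"
proof -
  define T where "T = (\<Sum>n. harm n / od n ^ p)"
  have sT: "(\<lambda>n. harm n / od n ^ p) sums T" unfolding T_def using T_summable[OF p(2)] by (rule summable_sums)
  define t where "t = (\<lambda>(n,k). (1 / real (k+1) - 1 / real (k+1+n)) / od n ^ p)"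
  have tnn: "t (n,k) \<ge> 0" for n k
  proof -
    have "1 / real (k+1+n) \<le> 1 / real (k+1)" by (intro divide_left_mono) auto
    then have "0 \<le> 1 / real (k+1) - 1 / real (k+1+n)" by simp
    then show ?thesis unfolding t_def by (simp add: less_imp_le)
  qed
  have in_k: "((\<lambda>k. t (n,k)) has_sum (harm n / od n ^ p)) UNIV" for n
  proof (rule sums_nonneg_imp_has_sum)
    show "(\<lambda>k. t (n,k)) sums (harm n / od n ^ p)"
      unfolding t_def using sums_divide[OF harm_sums[of n], of "od n ^ p"] by simp
  qed (rule tnn)
  have outer: "((\<lambda>n. harm n / od n ^ p) has_sum T) UNIV"
    by (rule sums_nonneg_imp_has_sum[OF sT]) (simp add: harm_nonneg less_imp_le)
  have t_has: "(t has_sum T) (Sigma UNIV (\<lambda>_. UNIV))"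
  proof (rule has_sum_SigmaI[OF in_k outer])
    show "t summable_on Sigma UNIV (\<lambda>_. UNIV)"
      by (rule summable_on_SigmaI[OF in_k]) (use outer tnn in \<open>auto simp: has_sum_iff\<close>)
  qed
  then have t_has': "((\<lambda>(k,n). t (n,k)) has_sum T) (UNIV \<times> UNIV)"
    using has_sum_swap[where f=t and A=UNIV and B=UNIV] by simp
  define Sm where "Sm k = (\<Sum>i\<in>{1..<p-1}. (-1)^i * (1 / od k ^ (i+1)) * L (p-i))" for k
  define R where "R k = (1 / real (k+1) - 2 / od k) * L p - 2 * Sm k - (2 / od k ^ p) * (harm k / 2 + ln 2)" for k
  have in_n: "(\<lambda>n. t (n,k)) sums R k" for k
  proof -
    have pt: "t (n,k) = (1 / real (k+1) - 2 / od k) * (1 / od n ^ p)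
       - 2 * (\<Sum>i\<in>{1..<p-1}. (-1)^i * (1 / od k ^ (i+1)) * (1 / od n ^ (p-i)))
       - (2 / od k ^ p) * (1 / od n - 1 / (od n + od k))" for n
    proof -
      define x where "x = od n"
      define y where "y = od k"
      have xp: "x > 0" "y > 0" by (simp_all add: x_def y_def)
      have h1: "1 / real (k+1+n) / x ^ p = 2 * (1 / ((x+y) * x^p))"
      proof -
        have e: "x + y = 2 * real (k+1+n)" by (simp add: x_def y_def od_def)
        have g: "1/a/X = 2*(1/((2*a)*X))" for a X :: real
          by (cases "a*X = 0") (simp_all add: field_simps)
        show ?thesis unfolding e by (rule g)
      qed
      have h2: "(\<Sum>i\<in>{1..<p-1}. (-1)^i / (y^(i+1) * x^(p-i))) = (\<Sum>i\<in>{1..<p-1}. (-1)^i * (1 / y ^ (i+1)) * (1 / x ^ (p-i)))"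
        by (intro sum.cong refl) simp
      have "t (n,k) = 1 / real (k+1) / x ^ p - 1 / real (k+1+n) / x ^ p"
        by (simp add: t_def x_def diff_divide_distrib)
      also have "\<dots> = 1 / real (k+1) / x ^ p - 2 * (1 / (y * x^p) + (\<Sum>i\<in>{1..<p-1}. (-1)^i / (y^(i+1) * x^(p-i)))
           + (1 / y^p) * (1/x - 1/(x+y)))"
        unfolding h1 pf_odd[OF xp p] ..
      also have "\<dots> = (1 / real (k+1) - 2 / y) * (1 / x ^ p)
       - 2 * (\<Sum>i\<in>{1..<p-1}. (-1)^i * (1 / y ^ (i+1)) * (1 / x ^ (p-i)))
       - (2 / y ^ p) * (1 / x - 1 / (x + y))"
        unfolding h2 by (simp add: algebra_simps)
      finally show ?thesis by (simp add: x_def y_def)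
    qed
    have s1: "(\<lambda>n. (1 / real (k+1) - 2 / od k) * (1 / od n ^ p)) sums ((1 / real (k+1) - 2 / od k) * L p)"
      by (intro sums_mult sums_L) (use p in simp)
    have s2: "(\<lambda>n. 2 * (\<Sum>i\<in>{1..<p-1}. (-1)^i * (1 / od k ^ (i+1)) * (1 / od n ^ (p-i)))) sums (2 * Sm k)"
      unfolding Sm_def
    proof (intro sums_mult sums_sum sums_L)
      fix i assume "i \<in> {1..<p-1}" then show "2 \<le> p - i" by auto
    qed
    have s3: "(\<lambda>n. (2 / od k ^ p) * (1 / od n - 1 / (od n + od k))) sums ((2 / od k ^ p) * (harm k / 2 + ln 2))"
      by (intro sums_mult odd_ln_sums)
    show ?thesis unfolding pt R_def by (intro sums_diff s1 s2 s3)
  qed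
  have R_has: "(R has_sum T) UNIV"
    using has_sum_Sigma'[where f="\<lambda>(k,n). t (n,k)" and A=UNIV and B="\<lambda>_. UNIV" and b=R and a=T]
      t_has' sums_nonneg_imp_has_sum[OF in_n tnn] by simp
  then have RT: "R sums T" by (rule has_sum_imp_sums)
  define Sig where "Sig = (\<Sum>i\<in>{1..<p-1}. (-1)^i * L (i+1) * L (p-i))"
  have r1: "(\<lambda>k. (1 / real (k+1) - 2 / od k) * L p) sums ((- 2 * ln 2) * L p)"
  proof (rule sums_mult2)
    have "(\<lambda>k. -2 * (inverse (real (2*k+1)) - inverse (real (2*k+2)))) sums (-2 * ln 2)"
      by (intro sums_mult alternating_harmonic_series_sums')
    moreover have "-2 * (inverse (real (2*k+1)) - inverse (real (2*k+2))) = 1 / real (k+1) - 2 / od k" for k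
    proof -
      have a: "inverse (real (2*k+2)) = (1/2) * (1 / real (k+1))"
      proof -
        have "real (2*k+2) = 2 * real (k+1)" by simp
        then have "inverse (real (2*k+2)) = inverse 2 * inverse (real (k+1))" by (simp only: inverse_mult_distrib)
        then show ?thesis by (simp only: inverse_eq_divide)
      qed
      have b: "inverse (real (2*k+1)) = 1 / od k" by (simp add: od_def inverse_eq_divide)
      have c: "\<And>w z::real. -2*(w - (1/2)*z) = z - 2*w" by simp
      show ?thesis unfolding a b c by (simp only: divide_inverse mult_1)
    qed
    ultimately show "(\<lambda>k. 1 / real (k+1) - 2 / od k) sums (- 2 * ln 2)" by simp
  qed
  have r2: "(\<lambda>k. 2 * Sm k) sums (2 * Sig)"
    unfolding Sm_def Sig_def
  proof (intro sums_mult sums_sum)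
    fix i assume i: "i \<in> {1..<p-1}"
    have "(\<lambda>k. ((-1)^i * L (p-i)) * (1 / od k ^ (i+1))) sums (((-1)^i * L (p-i)) * L (i+1))"
      by (intro sums_mult sums_L) (use i in auto)
    then show "(\<lambda>k. (-1)^i * (1 / od k ^ (i+1)) * L (p-i)) sums ((-1)^i * L (i+1) * L (p-i))"
      by (simp add: mult_ac)
  qed
  have r3: "(\<lambda>k. (2 / od k ^ p) * (harm k / 2 + ln 2)) sums (T + (2 * ln 2) * L p)"
  proof -
    have "(\<lambda>k. harm k / od k ^ p + (2 * ln 2) * (1 / od k ^ p)) sums (T + (2 * ln 2) * L p)"
      by (intro sums_add sT sums_mult sums_L) (use p in simp)
    moreover have "harm k / od k ^ p + (2 * ln 2) * (1 / od k ^ p) = (2 / od k ^ p) * (harm k / 2 + ln 2)" for k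
    proof -
      have "od k ^ p \<noteq> 0" using od_pos[of k] by (metis power_not_zero less_irrefl)
      then show ?thesis by (simp add: field_simps)
    qed
    ultimately show ?thesis by simp
  qed
  have "R sums ((- 2 * ln 2) * L p - 2 * Sig - (T + (2 * ln 2) * L p))"
    unfolding R_def by (intro sums_diff r1 r2 r3)
  from sums_unique2[OF this RT] have "T = - 2 * ln 2 * L p - Sig" by (simp add: algebra_simps)
  with sT show ?thesis by (simp add: Sig_def)
qed

lemma sum_even_odd: fixes m :: nat shows "(\<Sum>i<2*m. f i) = (\<Sum>j<m. f (2*j)) + (\<Sum>j<m. (f (2*j+1) :: real))"
  by (induction m) (simp_all add: algebra_simps)

lemma sym_sum:
  fixes g :: "nat \<Rightarrow> real"
  assumes "b \<ge> 1" and sym: "\<And>j. j \<le> 2*b \<Longrightarrow> g (2*b - j) = g j"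
  shows "(\<Sum>j\<in>{1..<2*b}. g j) = g b + 2 * (\<Sum>j\<in>{1..<b}. g j)"
proof -
  have "(\<Sum>j\<in>{1..<2*b}. g j) = (\<Sum>j\<in>{1..<b}. g j) + (\<Sum>j\<in>{b..<2*b}. g j)"
    using assms(1) by (simp add: sum.atLeastLessThan_concat)
  also have "(\<Sum>j\<in>{b..<2*b}. g j) = g b + (\<Sum>j\<in>{Suc b..<2*b}. g j)"
    using assms(1) by (simp add: sum.atLeast_Suc_lessThan)
  also have "(\<Sum>j\<in>{Suc b..<2*b}. g j) = (\<Sum>j\<in>{1..<b}. g j)"
    by (rule sum.reindex_bij_witness[of _ "\<lambda>j. 2*b - j" "\<lambda>j. 2*b - j"]) (auto simp: sym)
  finally show ?thesis by simp
qed

lemma combine: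
  assumes "b \<ge> 1"
  shows "- (\<Sum>i\<in>{1..<4*b}. (-1)^i * L (i+1) * L (4*b+1-i))
    = (2 * real b + 1/2) * L (4*b+2) - L (2*b+1) ^ 2 - 2 * (\<Sum>q\<in>{1..<b}. L (2*q+1) * L (4*b-2*q+1))"
proof -
  define f where "f i = (-1)^i * L (i+1) * L (4*b+1-i)" for i
  have "(\<Sum>i<4*b. f i) = f 0 + (\<Sum>i\<in>{1..<4*b}. f i)"
    using assms by (simp add: lessThan_atLeast0 sum.atLeast_Suc_lessThan)
  moreover have "(\<Sum>i<4*b. f i) = (\<Sum>j<2*b. f (2*j)) + (\<Sum>j<2*b. f (2*j+1))"
    using sum_even_odd[of f "2*b"] by (simp add: mult.assoc)
  moreover have "(\<Sum>j<2*b. f (2*j)) = f 0 + (\<Sum>j\<in>{1..<2*b}. f (2*j))"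
    using assms by (simp add: lessThan_atLeast0 sum.atLeast_Suc_lessThan)
  ultimately have s: "(\<Sum>i\<in>{1..<4*b}. f i) = (\<Sum>j\<in>{1..<2*b}. f (2*j)) + (\<Sum>j<2*b. f (2*j+1))"
    by simp
  have odd: "(\<Sum>j<2*b. f (2*j+1)) = - (\<Sum>j<2*b. L (2*j+2) * L (2*(2*b-j)))"
    unfolding sum_negf[symmetric]
    by (intro sum.cong refl) (auto simp: f_def intro!: arg_cong[where f=L])
  have ev: "(\<Sum>j<2*b. L (2*j+2) * L (2*(2*b-j))) = (2 * real b + 1/2) * L (4*b+2)"
    using even_conv[of "2*b"] assms by simp
  define g where "g j = L (2*j+1) * L (4*b+1-2*j)" for j
  have fe: "(\<Sum>j\<in>{1..<2*b}. f (2*j)) = (\<Sum>j\<in>{1..<2*b}. g j)"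
    by (intro sum.cong refl) (simp add: f_def g_def)
  have gs: "(\<Sum>j\<in>{1..<2*b}. g j) = g b + 2 * (\<Sum>j\<in>{1..<b}. g j)"
  proof (rule sym_sum[OF assms])
    fix j assume j: "j \<le> 2*b"
    have "2*(2*b-j)+1 = 4*b+1-2*j" "4*b+1-2*(2*b-j) = 2*j+1" using j by auto
    then show "g (2*b - j) = g j" by (simp add: g_def mult.commute)
  qed
  have gb: "g b = L (2*b+1) ^ 2"
  proof -
    have "4*b+1-2*b = 2*b+1" by simp
    then show ?thesis by (simp add: g_def power2_eq_square)
  qed
  have gq: "(\<Sum>j\<in>{1..<b}. g j) = (\<Sum>q\<in>{1..<b}. L (2*q+1) * L (4*b-2*q+1))"
    by (intro sum.cong refl) (auto simp: g_def intro!: arg_cong[where f=L])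
  show ?thesis
    unfolding f_def[symmetric] s odd ev fe gs gb gq by simp
qed

lemma add_diff_eq_aux: "(a::real) + (x - y - z) = a + x - y - z" by simp

theorem mainTheorem5:
  fixes b :: nat
  assumes "b \<ge> 1"
  shows "(\<lambda>m. harm (Suc m) / (2 * real (Suc m) + 1) ^ (4 * b + 1)) sums
           (- 2 * dlambda (4 * b + 1) * ln 2
            + (2 * real b + 1 / 2) * dlambda (4 * b + 2)
            - (dlambda (2 * b + 1))\<^sup>2
            - 2 * (\<Sum>q = 1..b - 1. dlambda (2 * q + 1) * dlambda (4 * b - 2 * q + 1)))"
proof -
  have p: "odd (4*b+1)" "4*b+1 \<ge> 3" using assms by auto
  have ivl: "{1..b-1} = {1..<b}" using assms by auto
  have e: "4*b+1-1 = 4*b" by simp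
  have mT: "(\<lambda>n. harm n / od n ^ (4*b+1)) sums
     (- 2 * ln 2 * L (4*b+1) - (\<Sum>i\<in>{1..<4*b}. (-1)^i * L (i+1) * L (4*b+1-i)))"
    using main_T[OF p] unfolding e .
  define RHS where "RHS = (2 * real b + 1/2) * L (4*b+2) - L (2*b+1) ^ 2 - 2 * (\<Sum>q\<in>{1..<b}. L (2*q+1) * L (4*b-2*q+1))"
  have val: "- 2 * ln 2 * L (4*b+1) - (\<Sum>i\<in>{1..<4*b}. (-1)^i * L (i+1) * L (4*b+1-i)) = - 2 * ln 2 * L (4*b+1) + RHS"
  proof -
    have "- 2 * ln 2 * L (4*b+1) - (\<Sum>i\<in>{1..<4*b}. (-1)^i * L (i+1) * L (4*b+1-i))
       = - 2 * ln 2 * L (4*b+1) + (- (\<Sum>i\<in>{1..<4*b}. (-1)^i * L (i+1) * L (4*b+1-i)))"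
      by (rule diff_conv_add_uminus)
    also have "- (\<Sum>i\<in>{1..<4*b}. (-1)^i * L (i+1) * L (4*b+1-i)) = RHS"
      unfolding RHS_def by (rule combine[OF assms])
    finally show ?thesis .
  qed
  have m: "(\<lambda>n. harm n / od n ^ (4*b+1)) sums (- 2 * ln 2 * L (4*b+1) + RHS)"
    using mT unfolding val .
  have s1: "(\<lambda>n. harm (Suc n) / od (Suc n) ^ (4*b+1)) sums (- 2 * ln 2 * L (4*b+1) + RHS)"
    using m sums_Suc_iff[of "\<lambda>n. harm n / od n ^ (4*b+1)"] by (simp add: harm_altdef)
  have f: "(\<lambda>n. harm (Suc n) / od (Suc n) ^ (4*b+1)) = (\<lambda>m. harm (Suc m) / (2 * real (Suc m) + 1) ^ (4 * b + 1))"
    by (simp only: od_def)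
  have c: "- 2 * ln 2 * L (4*b+1) = - 2 * L (4*b+1) * ln 2" by simp
  have v: "- 2 * ln 2 * L (4*b+1) + RHS = - 2 * L (4*b+1) * ln 2
            + (2 * real b + 1 / 2) * L (4*b+2)
            - (L (2*b+1))\<^sup>2
            - 2 * (\<Sum>q\<in>{1..<b}. L (2*q+1) * L (4*b-2*q+1))"
    unfolding RHS_def c by (rule add_diff_eq_aux)
  from s1 have "(\<lambda>m. harm (Suc m) / (2 * real (Suc m) + 1) ^ (4 * b + 1)) sums
      (- 2 * L (4*b+1) * ln 2
            + (2 * real b + 1 / 2) * L (4*b+2)
            - (L (2*b+1))\<^sup>2
            - 2 * (\<Sum>q\<in>{1..<b}. L (2*q+1) * L (4*b-2*q+1)))"
    unfolding f v .
  then show ?thesis unfolding dlambda_nat ivl .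
qed

end
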